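(* Let $A$ be an $n\times n$ ASM and let $z_n=(n,n-1,\ldots,2,1)^T$. If $z_n^TA=z_n^TP$ for some $n\times n$ permutation matrix $P$, then $A=P$.
   Context: An $n\times n$ alternating sign matrix (ASM) is an $n\times n$ matrix with entries in $\{0,1,-1\}$ such that in every row and column the nonzeros alternate in sign, beginning and ending with $+1$. *)

theory Defs
  imports Main "HOL-Combinatorics.Permutations"
begin

(* n x n integer matrices are represented as functions nat => nat => int,
   with rows/columns indexed by 0..n-1; entries outside are irrelevant. *)

definition alternating_sign_list :: "int list \<Rightarrow> bool" where
  "alternating_sign_list xs \<longleftrightarrow>
     xs \<noteq> [] \<and> hd xs = 1 \<and> last xs = 1 \<and>
     (\<forall>k. Suc k < length xs \<longrightarrow> xs ! Suc k = - (xs ! k))"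

definition row_list :: "nat \<Rightarrow> (nat \<Rightarrow> nat \<Rightarrow> int) \<Rightarrow> nat \<Rightarrow> int list" where
  "row_list n A i = map (\<lambda>j. A i j) [0..<n]"

definition col_list :: "nat \<Rightarrow> (nat \<Rightarrow> nat \<Rightarrow> int) \<Rightarrow> nat \<Rightarrow> int list" where
  "col_list n A j = map (\<lambda>i. A i j) [0..<n]"

definition is_ASM :: "nat \<Rightarrow> (nat \<Rightarrow> nat \<Rightarrow> int) \<Rightarrow> bool" where
  "is_ASM n A \<longleftrightarrow>
     (\<forall>i<n. \<forall>j<n. A i j \<in> {0, 1, -1}) \<and>
     (\<forall>i<n. alternating_sign_list (filter (\<lambda>x. x \<noteq> 0) (row_list n A i))) \<and>
     (\<forall>j<n. alternating_sign_list (filter (\<lambda>x. x \<noteq> 0) (col_list n A j)))"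

definition perm_matrix :: "(nat \<Rightarrow> nat) \<Rightarrow> nat \<Rightarrow> nat \<Rightarrow> int" where
  "perm_matrix \<sigma> i j = (if j = \<sigma> i then 1 else 0)"

definition is_perm_matrix :: "nat \<Rightarrow> (nat \<Rightarrow> nat \<Rightarrow> int) \<Rightarrow> bool" where
  "is_perm_matrix n P \<longleftrightarrow>
     (\<exists>\<sigma>. \<sigma> permutes {..<n} \<and> (\<forall>i<n. \<forall>j<n. P i j = perm_matrix \<sigma> i j))"

(* z_n = (n, n-1, ..., 1)^T; with 0-based index i its entry is n - i *)
definition zvec :: "nat \<Rightarrow> nat \<Rightarrow> int" where
  "zvec n i = int n - int i"

definition zT_mult :: "nat \<Rightarrow> (nat \<Rightarrow> nat \<Rightarrow> int) \<Rightarrow> nat \<Rightarrow> int" where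
  "zT_mult n A j = (\<Sum>i<n. zvec n i * A i j)"

end

theory Submission
  imports Defs
begin

lemma alt_pow:
  assumes "alternating_sign_list ys" "k < length ys"
  shows "ys ! k = (-1) ^ k"
  using assms(2)
proof (induction k)
  case 0
  then show ?case using assms(1) by (cases ys) (auto simp: alternating_sign_list_def)
next
  case (Suc k)
  then show ?case using assms(1) by (auto simp: alternating_sign_list_def)
qed

lemma alt_sum:
  "(\<forall>k<length ys. ys ! k = ((-1::int) ^ k)) \<Longrightarrow>
    sum_list ys = (if even (length ys) then 0 else 1)"
proof (induction ys rule: rev_induct)
  case Nil
  then show ?case by simp
next
  case (snoc x xs)
  have h: "\<forall>k<length xs. xs ! k = (-1) ^ k"
  proof (intro allI impI)
    fix k assume "k < length xs"
    then show "xs ! k = (-1) ^ k" using snoc.prems[rule_format, of k] by (simp add: nth_append)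
  qed
  have "x = (-1) ^ length xs" using snoc.prems[rule_format, of "length xs"] by simp
  then show ?case using snoc.IH[OF h] by auto
qed

lemma sum_list_filter_nz: "sum_list (filter (\<lambda>x. x \<noteq> 0) xs) = sum_list (xs::int list)"
  by (induction xs) auto

lemma alt_prefix:
  fixes xs :: "int list"
  assumes a: "alternating_sign_list (filter (\<lambda>x. x \<noteq> 0) xs)"
  shows "sum_list (take m xs) \<in> {0,1}" and "sum_list xs = 1"
proof -
  let ?ys = "filter (\<lambda>x. x \<noteq> 0) xs"
  let ?zs = "filter (\<lambda>x. x \<noteq> 0) (take m xs)"
  have pw: "\<forall>k<length ?ys. ?ys ! k = (-1) ^ k" using alt_pow[OF a] by blast
  have split: "?ys = ?zs @ filter (\<lambda>x. x \<noteq> 0) (drop m xs)"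
    by (metis append_take_drop_id filter_append)
  have "\<forall>k<length ?zs. ?zs ! k = (-1) ^ k"
  proof (intro allI impI)
    fix k assume k: "k < length ?zs"
    have "?zs ! k = ?ys ! k" using k split by (metis nth_append)
    also have "\<dots> = (-1)^k" using pw k split by (metis length_append trans_less_add1)
    finally show "?zs ! k = (-1)^k" .
  qed
  from alt_sum[OF this] have "sum_list ?zs \<in> {0,1}" by auto
  then show "sum_list (take m xs) \<in> {0,1}" by (simp add: sum_list_filter_nz)
  have ne: "?ys \<noteq> []" and l: "last ?ys = 1" using a by (auto simp: alternating_sign_list_def)
  have "last ?ys = ?ys ! (length ?ys - 1)" using ne by (simp add: last_conv_nth)
  also have "\<dots> = (-1) ^ (length ?ys - 1)" using pw ne by simp
  finally have "(-1::int) ^ (length ?ys - 1) = 1" using l by simp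
  then have "even (length ?ys - 1)" by (metis neg_one_odd_power one_neq_neg_one)
  then have "odd (length ?ys)" using ne by (cases "length ?ys") auto
  then show "sum_list xs = 1" using alt_sum[OF pw] by (simp add: sum_list_filter_nz)
qed

lemma sum_list_take_map: "m \<le> n \<Longrightarrow> sum_list (take m (map f [0..<n])) = (\<Sum>i<m. f i)"
proof -
  assume "m \<le> n"
  then have "take m (map f [0..<n]) = map f [0..<m]" by (simp add: take_map)
  moreover have "sum_list (map f [0..<m]) = (\<Sum>i<m. f i)"
    by (simp add: sum_list_map_eq_sum_count2 atLeast0LessThan[symmetric] sum_set_upt_conv_sum_list_nat[symmetric])
  ultimately show ?thesis by simp
qed

lemma tri_sum: "(\<Sum>k<m. \<Sum>i<Suc k. a i) = (\<Sum>i<m. (int m - int i) * (a i :: int))"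
proof (induction m)
  case 0
  then show ?case by simp
next
  case (Suc m)
  have "(\<Sum>i<Suc m. (int (Suc m) - int i) * a i) = (\<Sum>i<Suc m. (int m - int i) * a i + a i)"
    by (rule sum.cong) (auto simp: algebra_simps)
  also have "\<dots> = (\<Sum>i<m. (int m - int i) * a i) + (\<Sum>i<Suc m. a i)"
    by (simp add: sum.distrib)
  finally show ?case using Suc by simp
qed

theorem mainTheorem8:
  fixes n :: nat and A P :: "nat \<Rightarrow> nat \<Rightarrow> int"
  assumes "is_ASM n A"
    and "is_perm_matrix n P"
    and "\<forall>j<n. zT_mult n A j = zT_mult n P j"
  shows "\<forall>i<n. \<forall>j<n. A i j = P i j"
proof -
  obtain \<sigma> where sp: "\<sigma> permutes {..<n}" and Pd: "\<forall>i<n. \<forall>j<n. P i j = perm_matrix \<sigma> i j"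
    using assms(2) unfolding is_perm_matrix_def by blast
  define r where "r j = inv \<sigma> j" for j
  have rlt: "r j < n" if "j < n" for j
    using that sp unfolding r_def by (metis lessThan_iff permutes_inv permutes_in_image)
  have req: "\<sigma> i = j \<longleftrightarrow> i = r j" for i j
    using permutes_inv_eq[OF sp] unfolding r_def by metis
  have slt: "\<sigma> i < n" if "i < n" for i
    using that sp by (metis lessThan_iff permutes_in_image)
  define f where "f j k = (\<Sum>i<Suc k. A i j)" for j k
  define g where "g j k = (\<Sum>i<Suc k. P i j)" for j k
  have fcol: "f j k \<in> {0,1}" if "j < n" "k < n" for j k
  proof -
    have "alternating_sign_list (filter (\<lambda>x. x \<noteq> 0) (col_list n A j))"
      using assms(1) that unfolding is_ASM_def by blast
    from alt_prefix(1)[OF this, of "Suc k"] show ?thesis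
      using that unfolding col_list_def f_def by (simp add: sum_list_take_map)
  qed
  have rowA: "(\<Sum>j<n. A i j) = 1" if "i < n" for i
  proof -
    have "alternating_sign_list (filter (\<lambda>x. x \<noteq> 0) (row_list n A i))"
      using assms(1) that unfolding is_ASM_def by blast
    from alt_prefix(2)[OF this] show ?thesis
      unfolding row_list_def using sum_list_take_map[of n n "\<lambda>j. A i j"] by simp
  qed
  have rowP: "(\<Sum>j<n. P i j) = 1" if "i < n" for i
  proof -
    have "(\<Sum>j<n. P i j) = (\<Sum>j<n. if j = \<sigma> i then 1 else 0)"
      by (rule sum.cong) (use Pd that in \<open>auto simp: perm_matrix_def\<close>)
    also have "\<dots> = 1" using slt[OF that] by simp
    finally show ?thesis .
  qed
  have gval: "g j k = (if r j \<le> k then 1 else 0)" if "j < n" "k < n" for j k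
  proof -
    have sr: "\<sigma> (r j) = j" using req by blast
    have "g j k = (\<Sum>i<Suc k. if i = r j then 1 else 0)"
      unfolding g_def
    proof (rule sum.cong)
      fix i assume "i \<in> {..<Suc k}"
      then have "i < n" using that by auto
      then have "P i j = (if j = \<sigma> i then 1 else 0)" using Pd that by (simp add: perm_matrix_def)
      also have "\<dots> = (if i = r j then 1 else 0)" using req[of i j] by metis
      finally show "P i j = (if i = r j then 1 else 0)" .
    qed simp
    also have "\<dots> = (if r j \<le> k then 1 else 0)" by simp
    finally show ?thesis .
  qed
  have colsum: "(\<Sum>k<n. f j k) = (\<Sum>k<n. g j k)" if "j < n" for j
    using assms(3) that tri_sum[where m=n and a="\<lambda>i. A i j"] tri_sum[where m=n and a="\<lambda>i. P i j"]
    unfolding f_def g_def zT_mult_def zvec_def by (simp del: sum.lessThan_Suc)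
  have rsum: "(\<Sum>j<n. f j k) = (\<Sum>j<n. g j k)" if "k < n" for k
  proof -
    have "(\<Sum>j<n. f j k) = (\<Sum>i<Suc k. \<Sum>j<n. A i j)" unfolding f_def by (rule sum.swap)
    also have "\<dots> = (\<Sum>i<Suc k. \<Sum>j<n. P i j)"
      by (rule sum.cong) (use that rowA rowP in auto)
    also have "\<dots> = (\<Sum>j<n. g j k)" unfolding g_def by (rule sum.swap)
    finally show ?thesis .
  qed
  define D where "D j k = (int k - int (r j)) * (g j k - f j k)" for j k
  have Dnn: "D j k \<ge> 0" if "j < n" "k < n" for j k
    using fcol[OF that] gval[OF that] unfolding D_def by (auto simp: mult_nonneg_nonneg mult_nonpos_nonpos)
  have Dcol: "(\<Sum>k<n. D j k) = (\<Sum>k<n. int k * (g j k - f j k))" if "j < n" for j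
  proof -
    have "(\<Sum>k<n. D j k) = (\<Sum>k<n. int k * (g j k - f j k)) - int (r j) * (\<Sum>k<n. g j k - f j k)"
      unfolding D_def by (simp only: sum_distrib_left sum_subtractf[symmetric] left_diff_distrib)
    also have "(\<Sum>k<n. g j k - f j k) = 0" using colsum[OF that] by (simp add: sum_subtractf)
    finally show ?thesis by simp
  qed
  have "(\<Sum>j<n. \<Sum>k<n. D j k) = (\<Sum>j<n. \<Sum>k<n. int k * (g j k - f j k))"
    by (rule sum.cong) (auto simp: Dcol)
  also have "\<dots> = (\<Sum>k<n. \<Sum>j<n. int k * (g j k - f j k))" by (rule sum.swap)
  also have "\<dots> = (\<Sum>k<n. int k * ((\<Sum>j<n. g j k) - (\<Sum>j<n. f j k)))"
    by (simp only: sum_distrib_left sum_subtractf[symmetric])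
  also have "\<dots> = 0" using rsum by simp
  finally have tot: "(\<Sum>j<n. \<Sum>k<n. D j k) = 0" .
  have D0: "D j k = 0" if "j < n" "k < n" for j k
  proof -
    have nn: "\<forall>j\<in>{..<n}. 0 \<le> (\<Sum>k<n. D j k)" using Dnn by (auto intro: sum_nonneg)
    have "(\<Sum>k<n. D j k) = 0" using sum_nonneg_eq_0_iff[of "{..<n}" "\<lambda>j. \<Sum>k<n. D j k"] nn tot that by auto
    then show ?thesis using sum_nonneg_eq_0_iff[of "{..<n}" "D j"] Dnn that by auto
  qed
  have fg: "f j k = g j k" if "j < n" "k < n" for j k
  proof (cases "k = r j")
    case False
    then show ?thesis using D0[OF that] unfolding D_def by auto
  next
    case True
    have z: "(\<Sum>k<n. g j k - f j k) = 0" using colsum[OF that(1)] by (simp add: sum_subtractf)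
    have "(\<Sum>k'<n. g j k' - f j k') = (g j k - f j k) + (\<Sum>k'\<in>{..<n} - {k}. g j k' - f j k')"
      using that sum.remove[of "{..<n}" k "\<lambda>k'. g j k' - f j k'"] by simp
    also have "(\<Sum>k'\<in>{..<n} - {k}. g j k' - f j k') = 0"
      using D0 that True unfolding D_def by (intro sum.neutral) auto
    finally show ?thesis using z by simp
  qed
  show ?thesis
  proof (intro allI impI)
    fix i j assume i: "i < n" and j: "j < n"
    show "A i j = P i j"
    proof (cases i)
      case 0
      then show ?thesis using fg[OF j i] unfolding f_def g_def by simp
    next
      case (Suc i')
      have "A i j = f j i - f j i'" unfolding f_def using Suc by simp
      also have "\<dots> = g j i - g j i'" using fg[OF j i] fg[OF j, of i'] Suc i by simp
      also have "\<dots> = P i j" unfolding g_def using Suc by simp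
      finally show ?thesis .
    qed
  qed
qed

end
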